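(* Let $G$ be a graph of girth at least $6$ having exactly one vertex $x$ of type $2$ and no vertex of type $k$ for any $k\geq 3$. Then $G$ is almost well-covered if and only if every internal vertex of $G$ other than $x$ is of type $0$ or $1$, $N(x)\cap V(G_0)=\emptyset$, $G_0$ is well-covered, and for every independent set $I$ in $G_1$ the following hold: (a) $\alpha(G_0)=i(G_0-N(I))$ if $I\cap N(x)=\emptyset$, and (b) $\alpha(G_0)-i(G_0-N(I))\leq 1$ if $I\cap N(x)\neq\emptyset$.
   Context: All graphs are finite and simple. The girth of a graph is the length of a shortest cycle (infinite for acyclic graphs). For a graph $H$, $\alpha(H)$ is the maximum size of an independent set and $i(H)$ is the minimum size of an inclusion-maximal independent set (both $0$ for the null graph). $H$ is well-covered if $\alpha(H)=i(H)$ and almost well-covered if $\alpha(H)-i(H)=1$. $N(v)$ is the neighborhood of $v$, $N(I)=\bigcup_{v\in I}N(v)$, and $G_0-N(I)$ denotes the graph obtained from $G_0$ by deleting the vertices of $N(I)$. Types of vertices: let $U$ be the set of vertices of $G$ whose connected component is a complete graph. In $G-U$, vertices of degree $1$ are leaves and the others are internal vertices. An internal vertex adjacent to exactly $k$ leaves is of type $k$; every vertex of $U$ is of type $0$. $G_i$ denotes the subgraph of $G$ induced by all vertices of type $i$. *)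

theory Defs
  imports Main
begin

definition graph :: "'a set \<Rightarrow> ('a \<Rightarrow> 'a \<Rightarrow> bool) \<Rightarrow> bool" where
  "graph V E \<longleftrightarrow> finite V \<and> (\<forall>u v. E u v \<longrightarrow> u \<in> V \<and> v \<in> V)
     \<and> (\<forall>u v. E u v \<longrightarrow> E v u) \<and> (\<forall>v. \<not> E v v)"

definition is_cycle :: "'a set \<Rightarrow> ('a \<Rightarrow> 'a \<Rightarrow> bool) \<Rightarrow> 'a list \<Rightarrow> bool" where
  "is_cycle V E cs \<longleftrightarrow> distinct cs \<and> length cs \<ge> 3 \<and> set cs \<subseteq> V \<and>
     (\<forall>i < length cs. E (cs ! i) (cs ! ((i + 1) mod length cs)))"

definition girth_at_least :: "'a set \<Rightarrow> ('a \<Rightarrow> 'a \<Rightarrow> bool) \<Rightarrow> nat \<Rightarrow> bool" where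
  "girth_at_least V E n \<longleftrightarrow> (\<forall>cs. is_cycle V E cs \<longrightarrow> length cs \<ge> n)"

definition indep :: "('a \<Rightarrow> 'a \<Rightarrow> bool) \<Rightarrow> 'a set \<Rightarrow> 'a set \<Rightarrow> bool" where
  "indep E S I \<longleftrightarrow> I \<subseteq> S \<and> (\<forall>u\<in>I. \<forall>v\<in>I. \<not> E u v)"

definition maximal_indep :: "('a \<Rightarrow> 'a \<Rightarrow> bool) \<Rightarrow> 'a set \<Rightarrow> 'a set \<Rightarrow> bool" where
  "maximal_indep E S I \<longleftrightarrow> indep E S I \<and> (\<forall>v \<in> S - I. \<not> indep E S (insert v I))"

definition alpha :: "('a \<Rightarrow> 'a \<Rightarrow> bool) \<Rightarrow> 'a set \<Rightarrow> nat" where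
  "alpha E S = Max (card ` {I. indep E S I})"

definition indep_dom :: "('a \<Rightarrow> 'a \<Rightarrow> bool) \<Rightarrow> 'a set \<Rightarrow> nat" where
  "indep_dom E S = Min (card ` {I. maximal_indep E S I})"

definition well_covered :: "('a \<Rightarrow> 'a \<Rightarrow> bool) \<Rightarrow> 'a set \<Rightarrow> bool" where
  "well_covered E S \<longleftrightarrow> alpha E S = indep_dom E S"

definition almost_well_covered :: "('a \<Rightarrow> 'a \<Rightarrow> bool) \<Rightarrow> 'a set \<Rightarrow> bool" where
  "almost_well_covered E S \<longleftrightarrow> int (alpha E S) - int (indep_dom E S) = 1"

definition nbhd :: "('a \<Rightarrow> 'a \<Rightarrow> bool) \<Rightarrow> 'a \<Rightarrow> 'a set" where
  "nbhd E v = {u. E v u}"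

definition nbhd_set :: "('a \<Rightarrow> 'a \<Rightarrow> bool) \<Rightarrow> 'a set \<Rightarrow> 'a set" where
  "nbhd_set E I = (\<Union>v\<in>I. nbhd E v)"

definition component :: "'a set \<Rightarrow> ('a \<Rightarrow> 'a \<Rightarrow> bool) \<Rightarrow> 'a \<Rightarrow> 'a set" where
  "component V E v = {u \<in> V. E\<^sup>*\<^sup>* v u}"

definition Uset :: "'a set \<Rightarrow> ('a \<Rightarrow> 'a \<Rightarrow> bool) \<Rightarrow> 'a set" where
  "Uset V E = {v \<in> V. \<forall>a \<in> component V E v. \<forall>b \<in> component V E v. a \<noteq> b \<longrightarrow> E a b}"

text \<open>Leaves and internal vertices of G - U (degree taken in G - U).\<close>
definition leaf :: "'a set \<Rightarrow> ('a \<Rightarrow> 'a \<Rightarrow> bool) \<Rightarrow> 'a \<Rightarrow> bool" where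
  "leaf V E v \<longleftrightarrow> v \<in> V - Uset V E \<and> card {u \<in> V - Uset V E. E v u} = 1"

definition internal :: "'a set \<Rightarrow> ('a \<Rightarrow> 'a \<Rightarrow> bool) \<Rightarrow> 'a \<Rightarrow> bool" where
  "internal V E v \<longleftrightarrow> v \<in> V - Uset V E \<and> \<not> leaf V E v"

definition has_type :: "'a set \<Rightarrow> ('a \<Rightarrow> 'a \<Rightarrow> bool) \<Rightarrow> nat \<Rightarrow> 'a \<Rightarrow> bool" where
  "has_type V E k v \<longleftrightarrow>
     (internal V E v \<and> card {u \<in> V. leaf V E u \<and> E v u} = k) \<or> (v \<in> Uset V E \<and> k = 0)"

definition type_set :: "'a set \<Rightarrow> ('a \<Rightarrow> 'a \<Rightarrow> bool) \<Rightarrow> nat \<Rightarrow> 'a set" where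
  "type_set V E k = {v \<in> V. has_type V E k v}"

end

theory Submission
  imports Defs
begin


lemma indep_finite_sets:
  assumes "finite S" shows "finite {I. indep E S I}"
  by (rule finite_subset[of _ "Pow S"]) (auto simp: indep_def assms)

lemma indep_empty[simp]: "indep E S {}" by (simp add: indep_def)

lemma alpha_ge: "finite S \<Longrightarrow> indep E S I \<Longrightarrow> card I \<le> alpha E S"
  unfolding alpha_def by (rule Max_ge) (auto intro: indep_finite_sets)

lemma alpha_attained: "finite S \<Longrightarrow> \<exists>I. indep E S I \<and> card I = alpha E S"
proof -
  assume f: "finite S"
  have "alpha E S \<in> card ` {I. indep E S I}"
    unfolding alpha_def by (rule Max_in) (auto intro: indep_finite_sets f indep_empty)
  then show ?thesis by auto
qed

lemma indep_le_alpha_of_subset: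
  "finite S \<Longrightarrow> indep E S I \<Longrightarrow> card I \<le> alpha E S" by (rule alpha_ge)

lemma indep_mono: "indep E S I \<Longrightarrow> S \<subseteq> S' \<Longrightarrow> indep E S' I"
  by (auto simp: indep_def)

lemma alpha_mono: "finite S' \<Longrightarrow> S \<subseteq> S' \<Longrightarrow> alpha E S \<le> alpha E S'"
  by (metis alpha_attained alpha_ge finite_subset indep_mono)

lemma extend_maximal:
  assumes "finite S" "indep E S I" shows "\<exists>K. I \<subseteq> K \<and> maximal_indep E S K"
proof -
  have "\<forall>I. indep E S I \<and> card (S - I) = n \<longrightarrow> (\<exists>K. I \<subseteq> K \<and> maximal_indep E S K)" for n
  proof (induction n rule: less_induct)
    case (less n)
    show ?case
    proof (intro allI impI)
      fix I assume h: "indep E S I \<and> card (S - I) = n"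
      show "\<exists>K. I \<subseteq> K \<and> maximal_indep E S K"
      proof (cases "maximal_indep E S I")
        case True then show ?thesis by blast
      next
        case False
        then obtain v where v: "v \<in> S - I" "indep E S (insert v I)"
          using h by (auto simp: maximal_indep_def)
        have "card (S - insert v I) < n"
          using h v assms(1) by (metis Diff_insert card_Diff1_less finite_Diff)
        then obtain K where "insert v I \<subseteq> K" "maximal_indep E S K"
          using less v by blast
        then show ?thesis by blast
      qed
    qed
  qed
  then show ?thesis using assms by blast
qed

lemma maximal_finite_sets:
  assumes "finite S" shows "finite {I. maximal_indep E S I}"
  by (rule finite_subset[of _ "Pow S"]) (auto simp: maximal_indep_def indep_def assms)

lemma indep_dom_le: "finite S \<Longrightarrow> maximal_indep E S K \<Longrightarrow> indep_dom E S \<le> card K"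
  unfolding indep_dom_def by (rule Min_le) (auto intro: maximal_finite_sets)

lemma indep_dom_attained: "finite S \<Longrightarrow> \<exists>K. maximal_indep E S K \<and> card K = indep_dom E S"
proof -
  assume f: "finite S"
  obtain K where "maximal_indep E S K" using extend_maximal[OF f indep_empty] by blast
  then have "indep_dom E S \<in> card ` {I. maximal_indep E S I}"
    unfolding indep_dom_def by (intro Min_in) (auto intro: maximal_finite_sets f)
  then show ?thesis by auto
qed

lemma indep_dom_le_alpha: "finite S \<Longrightarrow> indep_dom E S \<le> alpha E S"
  by (metis alpha_ge indep_dom_attained maximal_indep_def)




locale G16 =
  fixes V :: "'a set" and E :: "'a \<Rightarrow> 'a \<Rightarrow> bool" and x :: 'a
  assumes gr: "graph V E"
    and girth: "girth_at_least V E 6"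
    and xV: "x \<in> V" and xt: "has_type V E 2 x"
    and uniq2: "\<forall>v \<in> V. has_type V E 2 v \<longrightarrow> v = x"
    and no3: "\<forall>v \<in> V. \<forall>k \<ge> 3. \<not> has_type V E k v"
begin

lemma finV: "finite V" using gr by (simp add: graph_def)
lemma Ein: "E u v \<Longrightarrow> u \<in> V \<and> v \<in> V" using gr by (simp add: graph_def)
lemma Esym: "E u v \<Longrightarrow> E v u" using gr by (simp add: graph_def)
lemma Eirr: "\<not> E v v" using gr by (simp add: graph_def)

lemma no_tri: "E a b \<Longrightarrow> E b c \<Longrightarrow> E c a \<Longrightarrow> False"
proof -
  assume h: "E a b" "E b c" "E c a"
  have d: "distinct [a,b,c]" using h Eirr by auto
  have "is_cycle V E [a,b,c]"
    unfolding is_cycle_def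
  proof (intro conjI allI impI)
    fix i assume "i < length [a,b,c]"
    then have "i = 0 \<or> i = 1 \<or> i = 2" by auto
    then show "E ([a,b,c] ! i) ([a,b,c] ! ((i + 1) mod length [a,b,c]))"
      using h by auto
  qed (use d h Ein in auto)
  then show False using girth unfolding girth_at_least_def by fastforce
qed

lemma no_c4: "E a b \<Longrightarrow> E b c \<Longrightarrow> E c d \<Longrightarrow> E d a \<Longrightarrow> a \<noteq> c \<Longrightarrow> b \<noteq> d \<Longrightarrow> False"
proof -
  assume h: "E a b" "E b c" "E c d" "E d a" "a \<noteq> c" "b \<noteq> d"
  have d: "distinct [a,b,c,d]" using h Eirr by auto
  have "is_cycle V E [a,b,c,d]"
    unfolding is_cycle_def
  proof (intro conjI allI impI)
    fix i assume "i < length [a,b,c,d]"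
    then have "i = 0 \<or> i = 1 \<or> i = 2 \<or> i = 3" by auto
    then show "E ([a,b,c,d] ! i) ([a,b,c,d] ! ((i + 1) mod length [a,b,c,d]))"
      using h by auto
  qed (use d h Ein in auto)
  then show False using girth unfolding girth_at_least_def by fastforce
qed

lemma no_c5: "E a b \<Longrightarrow> E b c \<Longrightarrow> E c d \<Longrightarrow> E d e \<Longrightarrow> E e a \<Longrightarrow>
   a \<noteq> c \<Longrightarrow> a \<noteq> d \<Longrightarrow> b \<noteq> d \<Longrightarrow> b \<noteq> e \<Longrightarrow> c \<noteq> e \<Longrightarrow> False"
proof -
  assume h: "E a b" "E b c" "E c d" "E d e" "E e a" "a \<noteq> c" "a \<noteq> d" "b \<noteq> d" "b \<noteq> e" "c \<noteq> e"
  have d: "distinct [a,b,c,d,e]" using h Eirr by auto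
  have "is_cycle V E [a,b,c,d,e]"
    unfolding is_cycle_def
  proof (intro conjI allI impI)
    fix i assume "i < length [a,b,c,d,e]"
    then have "i = 0 \<or> i = 1 \<or> i = 2 \<or> i = 3 \<or> i = 4" by auto
    then show "E ([a,b,c,d,e] ! i) ([a,b,c,d,e] ! ((i + 1) mod length [a,b,c,d,e]))"
      using h by auto
  qed (use d h Ein in auto)
  then show False using girth unfolding girth_at_least_def by fastforce
qed

abbreviation "U \<equiv> Uset V E"
abbreviation "T0 \<equiv> type_set V E 0"
abbreviation "T1 \<equiv> type_set V E 1"
definition "lvs v = {u \<in> V. leaf V E u \<and> E v u}"
definition "par l = (THE s. E l s)"
definition "lf v = (SOME l. leaf V E l \<and> E v l)"

lemma rt_sym: "E\<^sup>*\<^sup>* u v \<Longrightarrow> E\<^sup>*\<^sup>* v u"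
proof (induction rule: rtranclp_induct)
  case base then show ?case by simp
next
  case (step y z) then show ?case
    by (meson Esym converse_rtranclp_into_rtranclp)
qed

lemma comp_adj: assumes "E u v" shows "component V E u = component V E v"
proof -
  have "E\<^sup>*\<^sup>* u w \<longleftrightarrow> E\<^sup>*\<^sup>* v w" for w
    using assms Esym[OF assms]
    by (meson converse_rtranclp_into_rtranclp)
  then show ?thesis unfolding component_def by auto
qed

lemma U_adj: "E u v \<Longrightarrow> u \<in> U \<longleftrightarrow> v \<in> U"
  using comp_adj Ein unfolding Uset_def by auto

lemma leaf_nbr: assumes "leaf V E l" shows "\<exists>s. \<forall>u. E l u \<longleftrightarrow> u = s"
proof -
  have lU: "l \<notin> U" using assms unfolding leaf_def by auto
  have "{u \<in> V - U. E l u} = {u. E l u}" using Ein U_adj lU by auto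
  moreover have "card {u \<in> V - U. E l u} = 1" using assms unfolding leaf_def by auto
  ultimately show ?thesis by (metis card_1_singletonE mem_Collect_eq singletonD singletonI)
qed

lemma par: assumes "leaf V E l" shows "E l u \<longleftrightarrow> u = par l"
proof -
  obtain s where s: "\<forall>u. E l u \<longleftrightarrow> u = s" using leaf_nbr[OF assms] by blast
  then have "par l = s" unfolding par_def by auto
  then show ?thesis using s by auto
qed

lemma par': "leaf V E l \<Longrightarrow> E u l \<longleftrightarrow> u = par l"
  using par Esym by blast

lemma leaf_V: "leaf V E l \<Longrightarrow> l \<in> V" by (simp add: leaf_def)
lemma leaf_nU: "leaf V E l \<Longrightarrow> l \<notin> U" by (simp add: leaf_def)

lemma par_not_leaf: assumes "leaf V E l" shows "\<not> leaf V E (par l)"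
proof
  let ?s = "par l"
  assume ls: "leaf V E ?s"
  have e1: "E l u \<longleftrightarrow> u = ?s" for u using par[OF assms] .
  have e2: "E ?s u \<longleftrightarrow> u = l" for u using par[OF ls] e1 Esym by metis
  have sub: "E\<^sup>*\<^sup>* l w \<Longrightarrow> w \<in> {l, ?s}" for w
  proof (induction rule: rtranclp_induct)
    case base then show ?case by simp
  next
    case (step y z) then show ?case using e1 e2 by auto
  qed
  have "l \<in> U"
    unfolding Uset_def component_def using leaf_V[OF assms] sub e1 e2 by fastforce
  then show False using leaf_nU[OF assms] by simp
qed

lemma internal_nU: "internal V E v \<Longrightarrow> v \<notin> U" by (simp add: internal_def)

lemma internal_two: assumes "internal V E v" "E v y" shows "\<exists>w. E v w \<and> w \<noteq> y"
proof (rule ccontr)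
  assume nt: "\<not> ?thesis"
  have yU: "y \<notin> U" using U_adj[OF assms(2)] internal_nU[OF assms(1)] by simp
  have "{u \<in> V - U. E v u} = {y}"
  proof
    show "{u \<in> V - U. E v u} \<subseteq> {y}" using nt by auto
    show "{y} \<subseteq> {u \<in> V - U. E v u}" using yU Ein[OF assms(2)] assms(2) by auto
  qed
  then show False using assms(1) unfolding internal_def leaf_def by auto
qed

lemma ht_unique: "has_type V E j v \<Longrightarrow> has_type V E k v \<Longrightarrow> j = k"
  unfolding has_type_def using internal_nU by auto

lemma lvs_fin: "finite (lvs v)" unfolding lvs_def using finV by auto

lemma internal_type: "internal V E v \<Longrightarrow> has_type V E (card (lvs v)) v"
  unfolding has_type_def lvs_def by auto

lemma internal_V: "internal V E v \<Longrightarrow> v \<in> V" by (simp add: internal_def)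

lemma partition: assumes "v \<in> V" shows "v \<in> T0 \<or> v \<in> T1 \<or> v = x \<or> leaf V E v"
proof -
  consider "v \<in> U" | "leaf V E v" | "internal V E v" using assms unfolding internal_def by auto
  then show ?thesis
  proof cases
    case 1 then show ?thesis unfolding type_set_def has_type_def using assms by auto
  next
    case 2 then show ?thesis by simp
  next
    case 3
    have ht: "has_type V E (card (lvs v)) v" using internal_type[OF 3] .
    have "card (lvs v) < 3" using no3 ht assms by (meson not_less)
    then consider "card (lvs v) = 0" | "card (lvs v) = 1" | "card (lvs v) = 2" by linarith
    then show ?thesis using ht assms uniq2 unfolding type_set_def by cases auto
  qed
qed

lemma leaf_untyped: "leaf V E l \<Longrightarrow> \<not> has_type V E k l"
  unfolding has_type_def internal_def leaf_def by auto

lemma x_internal: "internal V E x" using xt unfolding has_type_def by auto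

lemma x_notT0: "x \<notin> T0" using xt ht_unique unfolding type_set_def by fastforce
lemma x_notT1: "x \<notin> T1" using xt ht_unique unfolding type_set_def by fastforce
lemma T0T1: "v \<in> T0 \<Longrightarrow> v \<notin> T1" using ht_unique unfolding type_set_def by fastforce
lemma leaf_notT0: "leaf V E l \<Longrightarrow> l \<notin> T0" using leaf_untyped unfolding type_set_def by auto
lemma leaf_notT1: "leaf V E l \<Longrightarrow> l \<notin> T1" using leaf_untyped unfolding type_set_def by auto
lemma leaf_not_x: "leaf V E l \<Longrightarrow> l \<noteq> x" using leaf_untyped xt by auto

lemma par_type: assumes "leaf V E l" shows "par l \<in> T1 \<or> par l = x"
proof -
  let ?s = "par l"
  have els: "E l ?s" using par[OF assms] by simp
  have sV: "?s \<in> V" using Ein[OF els] by simp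
  have sU: "?s \<notin> U" using U_adj[OF els] leaf_nU[OF assms] by simp
  have si: "internal V E ?s" using sV sU par_not_leaf[OF assms] unfolding internal_def by simp
  have "l \<in> lvs ?s" unfolding lvs_def using assms leaf_V Esym[OF els] by auto
  then have c1: "card (lvs ?s) \<ge> 1" using lvs_fin by (metis One_nat_def Suc_leI card_gt_0_iff empty_iff)
  have ht: "has_type V E (card (lvs ?s)) ?s" using internal_type[OF si] .
  have "card (lvs ?s) < 3" using no3 ht sV by (meson not_less)
  then consider "card (lvs ?s) = 1" | "card (lvs ?s) = 2" using c1 by linarith
  then show ?thesis using ht sV uniq2 unfolding type_set_def by cases auto
qed

lemma T0_no_leaf: "v \<in> T0 \<Longrightarrow> leaf V E l \<Longrightarrow> \<not> E v l"
  using par' par_type T0T1 x_notT0 by metis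

lemma T1_internal: "v \<in> T1 \<Longrightarrow> internal V E v"
  unfolding type_set_def has_type_def by auto

lemma T1_lvs: assumes "v \<in> T1" shows "lvs v = {lf v}"
proof -
  have "has_type V E (card (lvs v)) v" using internal_type[OF T1_internal[OF assms]] .
  then have "card (lvs v) = 1" using assms ht_unique unfolding type_set_def by auto
  then obtain l where l: "lvs v = {l}" by (meson card_1_singletonE)
  then have "leaf V E l \<and> E v l" unfolding lvs_def by auto
  moreover have "leaf V E l' \<and> E v l' \<Longrightarrow> l' = l" for l'
    using l leaf_V unfolding lvs_def by auto
  ultimately have "lf v = l" unfolding lf_def by (metis (mono_tags, lifting) someI)
  then show ?thesis using l by simp
qed

lemma lf: assumes "v \<in> T1" shows "leaf V E (lf v)" "E v (lf v)" "par (lf v) = v"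
proof -
  have "lf v \<in> lvs v" using T1_lvs[OF assms] by simp
  then show a: "leaf V E (lf v)" and b: "E v (lf v)" unfolding lvs_def by auto
  show "par (lf v) = v" using par'[OF a] b by simp
qed

lemma x_lvs: "card (lvs x) = 2"
  using internal_type[OF x_internal] xt ht_unique by blast

lemma leaf_cases: assumes "leaf V E l" shows "(\<exists>v \<in> T1. l = lf v) \<or> l \<in> lvs x"
proof (cases "par l = x")
  case True then show ?thesis
    using assms par' leaf_V unfolding lvs_def by auto
next
  case False
  then have p: "par l \<in> T1" using par_type[OF assms] by simp
  have "l \<in> lvs (par l)" using assms par' leaf_V unfolding lvs_def by auto
  then show ?thesis using T1_lvs[OF p] p by auto
qed

end



context G16 begin
lemma ins_indep: "indep E S J \<Longrightarrow> a \<in> S \<Longrightarrow> (\<forall>u\<in>J. \<not> E a u) \<Longrightarrow> indep E S (insert a J)"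
  unfolding indep_def using Esym Eirr by blast

lemma not_indep_ins: "\<not> indep E S (insert a J) \<Longrightarrow> indep E S J \<Longrightarrow> a \<in> S \<Longrightarrow> \<exists>u\<in>J. E a u"
  using ins_indep by blast
end

locale G16b = G16 +
  fixes l1 l2
  assumes l12: "l1 \<noteq> l2" and lx: "lvs x = {l1, l2}"
begin

lemma l1: "leaf V E l1" "E x l1" "par l1 = x"
proof -
  have "l1 \<in> lvs x" using lx by simp
  then show a: "leaf V E l1" and b: "E x l1" unfolding lvs_def by auto
  show "par l1 = x" using par'[OF a] b by simp
qed
lemma l2: "leaf V E l2" "E x l2" "par l2 = x"
proof -
  have "l2 \<in> lvs x" using lx by simp
  then show a: "leaf V E l2" and b: "E x l2" unfolding lvs_def by auto
  show "par l2 = x" using par'[OF a] b by simp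
qed

lemma lf_inj: "inj_on lf T1" by (metis inj_onI lf(3))

lemma V_decomp: "V = T0 \<union> T1 \<union> lf ` T1 \<union> {x, l1, l2}"
proof
  show "V \<subseteq> T0 \<union> T1 \<union> lf ` T1 \<union> {x, l1, l2}"
    using partition leaf_cases lx by blast
  show "T0 \<union> T1 \<union> lf ` T1 \<union> {x, l1, l2} \<subseteq> V"
    using xV l1 l2 leaf_V lf unfolding type_set_def by auto
qed

lemma lfT1_leaf: "u \<in> lf ` T1 \<Longrightarrow> leaf V E u" using lf by auto

lemma disj: "T0 \<inter> T1 = {}" "T0 \<inter> lf ` T1 = {}" "T0 \<inter> {x,l1,l2} = {}"
  "T1 \<inter> lf ` T1 = {}" "T1 \<inter> {x,l1,l2} = {}" "lf ` T1 \<inter> {x,l1,l2} = {}"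
proof -
  show "T0 \<inter> T1 = {}" using T0T1 by blast
  show "T0 \<inter> lf ` T1 = {}" using lfT1_leaf leaf_notT0 by blast
  show "T0 \<inter> {x,l1,l2} = {}" using x_notT0 l1(1) l2(1) leaf_notT0 by blast
  show "T1 \<inter> lf ` T1 = {}" using lfT1_leaf leaf_notT1 by blast
  show "T1 \<inter> {x,l1,l2} = {}" using x_notT1 l1(1) l2(1) leaf_notT1 by blast
  have "lf v \<noteq> l1" "lf v \<noteq> l2" "lf v \<noteq> x" if "v \<in> T1" for v
    using lf[OF that] l1 l2 x_notT1 that leaf_not_x by metis+
  then show "lf ` T1 \<inter> {x,l1,l2} = {}" by blast
qed

lemma finT: "finite T0" "finite T1" using finV unfolding type_set_def by auto

lemma card_split:
  assumes "J \<subseteq> V"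
  shows "card J = card (J \<inter> T0) + card (J \<inter> T1) + card {v \<in> T1. lf v \<in> J} + card (J \<inter> {x,l1,l2})"
proof -
  have fJ: "finite J" using assms finV finite_subset by blast
  have J: "J = (J \<inter> T0) \<union> (J \<inter> T1) \<union> (J \<inter> lf ` T1) \<union> (J \<inter> {x,l1,l2})"
    using assms V_decomp by blast
  have c1: "card (J \<inter> lf ` T1) = card {v \<in> T1. lf v \<in> J}"
  proof -
    have "J \<inter> lf ` T1 = lf ` {v \<in> T1. lf v \<in> J}" by auto
    moreover have "inj_on lf {v \<in> T1. lf v \<in> J}" using lf_inj by (rule inj_on_subset) auto
    ultimately show ?thesis by (simp add: card_image)
  qed
  have "card J = card ((J \<inter> T0) \<union> (J \<inter> T1) \<union> (J \<inter> lf ` T1) \<union> (J \<inter> {x,l1,l2}))"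
    using J by simp
  also have "\<dots> = card ((J \<inter> T0) \<union> (J \<inter> T1) \<union> (J \<inter> lf ` T1)) + card (J \<inter> {x,l1,l2})"
    by (rule card_Un_disjoint) (use fJ disj in auto)
  also have "card ((J \<inter> T0) \<union> (J \<inter> T1) \<union> (J \<inter> lf ` T1)) = card ((J \<inter> T0) \<union> (J \<inter> T1)) + card (J \<inter> lf ` T1)"
    by (rule card_Un_disjoint) (use fJ disj in auto)
  also have "card ((J \<inter> T0) \<union> (J \<inter> T1)) = card (J \<inter> T0) + card (J \<inter> T1)"
    by (rule card_Un_disjoint) (use fJ disj in auto)
  finally show ?thesis using c1 by simp
qed

lemma indep_count:
  assumes "indep E V J"
  shows "card J \<le> card (J \<inter> T0) + card T1 + 2"
proof -
  have JV: "J \<subseteq> V" using assms unfolding indep_def by auto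
  have s1: "{v \<in> T1. lf v \<in> J} \<subseteq> T1 - J"
    using assms lf(2) unfolding indep_def by blast
  have "card (J \<inter> T1) + card {v \<in> T1. lf v \<in> J} \<le> card (J \<inter> T1) + card (T1 - J)"
    using card_mono[OF _ s1] finT by auto
  also have "\<dots> = card T1"
    using card_Int_Diff[OF finT(2), of J] by (simp add: Int_commute)
  finally have a: "card (J \<inter> T1) + card {v \<in> T1. lf v \<in> J} \<le> card T1" .
  have b: "card (J \<inter> {x,l1,l2}) \<le> 2"
  proof (cases "x \<in> J")
    case True
    then have "l1 \<notin> J" "l2 \<notin> J" using assms l1 l2 unfolding indep_def by auto
    then have c: "J \<inter> {x,l1,l2} = {x}" using True by auto
    show ?thesis unfolding c by simp
  next
    case False
    then have "J \<inter> {x,l1,l2} \<subseteq> {l1,l2}" by auto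
    moreover have "card {l1,l2} = 2" using l12 by simp
    ultimately show ?thesis by (metis card_mono finite.emptyI finite.insertI)
  qed
  show ?thesis using card_split[OF JV] a b by linarith
qed

lemma max_count:
  assumes "maximal_indep E V J"
  shows "card J = card (J \<inter> T0) + card T1 + (if x \<in> J then 1 else 2)"
proof -
  have ind: "indep E V J" using assms unfolding maximal_indep_def by simp
  have JV: "J \<subseteq> V" using ind unfolding indep_def by auto
  have leafin: "l \<in> J" if lh: "leaf V E l" "par l \<notin> J" for l
  proof (rule ccontr)
    assume "l \<notin> J"
    then have "\<not> indep E V (insert l J)" using assms leaf_V[OF lh(1)] unfolding maximal_indep_def by blast
    then obtain u where "u \<in> J" "E l u" using not_indep_ins ind leaf_V[OF lh(1)] by blast
    then show False using par[OF lh(1)] lh(2) by auto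
  qed
  have s1: "{v \<in> T1. lf v \<in> J} = T1 - J"
  proof
    show "{v \<in> T1. lf v \<in> J} \<subseteq> T1 - J" using ind lf(2) unfolding indep_def by blast
    show "T1 - J \<subseteq> {v \<in> T1. lf v \<in> J}" using leafin lf by auto
  qed
  have a: "card (J \<inter> T1) + card {v \<in> T1. lf v \<in> J} = card T1"
    using s1 card_Int_Diff[OF finT(2), of J] by (simp add: Int_commute)
  have b: "card (J \<inter> {x,l1,l2}) = (if x \<in> J then 1 else 2)"
  proof (cases "x \<in> J")
    case True
    then have "l1 \<notin> J" "l2 \<notin> J" using ind l1 l2 unfolding indep_def by auto
    then have c: "J \<inter> {x,l1,l2} = {x}" using True by auto
    show ?thesis unfolding c using True by simp
  next
    case False
    then have c: "J \<inter> {x,l1,l2} = {l1,l2}" using leafin l1 l2 by auto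
    show ?thesis unfolding c using False l12 by simp
  qed
  show ?thesis using card_split[OF JV] a b by linarith
qed

end



context G16b begin

lemma nb_iff: "u \<in> nbhd_set E I \<longleftrightarrow> (\<exists>i\<in>I. E i u)"
  unfolding nbhd_set_def nbhd_def by auto
lemma nbx_iff: "u \<in> nbhd E v \<longleftrightarrow> E v u" unfolding nbhd_def by auto

lemma adj_not_indep: "u \<in> J \<Longrightarrow> E v u \<Longrightarrow> \<not> indep E S (insert v J)"
  unfolding indep_def by auto

lemma restrict:
  assumes "maximal_indep E V J"
  shows "maximal_indep E (T0 - nbhd_set E (J \<inter> T1) - (if x \<in> J then nbhd E x else {})) (J \<inter> T0)"
proof -
  let ?H = "T0 - nbhd_set E (J \<inter> T1) - (if x \<in> J then nbhd E x else {})"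
  have ind: "indep E V J" using assms unfolding maximal_indep_def by simp
  have sub: "J \<inter> T0 \<subseteq> ?H"
  proof
    fix v assume v: "v \<in> J \<inter> T0"
    have "v \<notin> nbhd_set E (J \<inter> T1)" using v ind unfolding nb_iff indep_def by blast
    moreover have "x \<in> J \<Longrightarrow> v \<notin> nbhd E x" using v ind unfolding nbx_iff indep_def by blast
    ultimately show "v \<in> ?H" using v by auto
  qed
  have i2: "indep E ?H (J \<inter> T0)" using sub ind unfolding indep_def by auto
  have "\<not> indep E ?H (insert v (J \<inter> T0))" if v: "v \<in> ?H - (J \<inter> T0)" for v
  proof -
    have vT0: "v \<in> T0" "v \<notin> J" using v by auto
    have vV: "v \<in> V" using vT0 unfolding type_set_def by auto
    have "\<not> indep E V (insert v J)" using assms vT0 vV unfolding maximal_indep_def by auto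
    then obtain u where u: "u \<in> J" "E v u" using not_indep_ins ind vV by blast
    have uV: "u \<in> V" using Ein u by auto
    have "u \<in> T0"
    proof -
      consider "u \<in> T0" | "u \<in> T1" | "u = x" | "leaf V E u" using partition[OF uV] by auto
      then show ?thesis
      proof cases
        case 2 then have "v \<in> nbhd_set E (J \<inter> T1)" using u Esym unfolding nb_iff by blast
        then show ?thesis using v by auto
      next
        case 3 then have "v \<in> nbhd E x" using u Esym unfolding nbx_iff by blast
        then show ?thesis using v u 3 by auto
      next
        case 4 then show ?thesis using T0_no_leaf vT0 u by blast
      qed simp
    qed
    then show ?thesis using u adj_not_indep[of u "J \<inter> T0" v] by auto
  qed
  then show ?thesis using i2 unfolding maximal_indep_def by blast
qed

lemma construct:
  assumes I: "indep E T1 I" and IX: "X \<Longrightarrow> I \<inter> nbhd E x = {}"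
    and K: "maximal_indep E (T0 - nbhd_set E I - (if X then nbhd E x else {})) K"
  shows "maximal_indep E V (I \<union> lf ` (T1 - I) \<union> (if X then {x} else {l1,l2}) \<union> K)
     \<and> card (I \<union> lf ` (T1 - I) \<union> (if X then {x} else {l1,l2}) \<union> K) = card K + card T1 + (if X then 1 else 2)"
proof -
  let ?H = "T0 - nbhd_set E I - (if X then nbhd E x else {})"
  let ?J = "I \<union> lf ` (T1 - I) \<union> (if X then {x} else {l1,l2}) \<union> K"
  have IT1: "I \<subseteq> T1" using I unfolding indep_def by auto
  have KH: "K \<subseteq> ?H" using K unfolding maximal_indep_def indep_def by auto
  have KT0: "K \<subseteq> T0" using KH by auto
  have T0V: "T0 \<subseteq> V" "T1 \<subseteq> V" unfolding type_set_def by auto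
  have JV: "?J \<subseteq> V" using IT1 KT0 T0V lf xV l1 l2 leaf_V by auto
  have xl: "x \<noteq> l1" "x \<noteq> l2" using leaf_not_x l1(1) l2(1) by metis+
  have xlf: "x \<notin> lf ` T1" using disj(6) by blast
  have xJ: "x \<in> ?J \<longleftrightarrow> X" using IT1 KT0 x_notT0 x_notT1 xlf xl
    by (auto split: if_splits)
  have JT0: "?J \<inter> T0 = K" using IT1 KT0 disj by auto
  have Jleaf: "par a \<notin> ?J" if a: "a \<in> ?J" "leaf V E a" for a
  proof -
    have "a \<notin> I" "a \<notin> K" using a IT1 KT0 leaf_notT0 leaf_notT1 by auto
    then consider w where "w \<in> T1 - I" "a = lf w" | "\<not> X" "a \<in> {l1,l2}"
      using a leaf_not_x[OF a(2)] by (auto split: if_splits)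
    then show ?thesis
    proof cases
      case 1
      then have "par a = w" using lf by auto
      then show ?thesis using 1 KT0 disj(1) lf x_notT1 l1 l2 leaf_notT1
        by (auto split: if_splits)
    next
      case 2
      then have "par a = x" using l1 l2 by auto
      then show ?thesis using xJ 2 by simp
    qed
  qed
  have noE: "\<not> E a b" if ab: "a \<in> ?J" "b \<in> ?J" for a b
  proof
    assume e: "E a b"
    show False
    proof (cases "leaf V E a \<or> leaf V E b")
      case True
      then show ?thesis using Jleaf par par' ab e by metis
    next
      case False
      then have "a \<in> I \<union> (if X then {x} else {}) \<union> K" "b \<in> I \<union> (if X then {x} else {}) \<union> K"
        using ab lf l1 l2 by (auto split: if_splits)
      then have a': "a \<in> I \<or> (X \<and> a = x) \<or> a \<in> K" and b': "b \<in> I \<or> (X \<and> b = x) \<or> b \<in> K"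
        by (auto split: if_splits)
      have II: "\<not> E p q" if "p \<in> I" "q \<in> I" for p q using I that unfolding indep_def by blast
      have KK: "\<not> E p q" if "p \<in> K" "q \<in> K" for p q using K that unfolding maximal_indep_def indep_def by blast
      have IK: "\<not> E p q" if "p \<in> I" "q \<in> K" for p q
      proof
        assume "E p q" then have "q \<in> nbhd_set E I" using that unfolding nb_iff by blast
        then show False using KH that by auto
      qed
      have Ix: "\<not> E p x" if "p \<in> I" "X" for p
      proof
        assume "E p x" then have "p \<in> nbhd E x" using Esym unfolding nbx_iff by blast
        then show False using IX that by auto
      qed
      have Kx: "\<not> E p x" if "p \<in> K" "X" for p
      proof
        assume "E p x" then have "p \<in> nbhd E x" using Esym unfolding nbx_iff by blast
        then show False using KH that by auto
      qed
      show ?thesis using a' b' e II KK IK Ix Kx Esym Eirr by metis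
    qed
  qed
  have indJ: "indep E V ?J" using JV noE unfolding indep_def by blast
  have "\<exists>u\<in>?J. E v u" if v: "v \<in> V - ?J" for v
  proof -
    consider "v \<in> T0" | "v \<in> T1" | "v \<in> lf ` T1" | "v = x" | "v = l1" | "v = l2"
      using v V_decomp by blast
    then show ?thesis
    proof cases
      case 1
      show ?thesis
      proof (cases "v \<in> ?H")
        case True
        then have "\<not> indep E ?H (insert v K)" using K v unfolding maximal_indep_def by auto
        then obtain u where "u \<in> K" "E v u" using not_indep_ins K True unfolding maximal_indep_def by blast
        then show ?thesis by auto
      next
        case False
        then consider "v \<in> nbhd_set E I" | "X" "v \<in> nbhd E x" using 1 by (auto split: if_splits)
        then show ?thesis
        proof cases
          case 1 then obtain i where "i \<in> I" "E i v" unfolding nb_iff by blast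
          then show ?thesis using Esym by blast
        next
          case 2 then show ?thesis using Esym unfolding nbx_iff by auto
        qed
      qed
    next
      case 2 then have "lf v \<in> ?J" using v by auto
      then show ?thesis using lf(2)[OF 2] by blast
    next
      case 3 then obtain w where w: "w \<in> T1" "v = lf w" by auto
      then have "w \<in> I" using v by auto
      then show ?thesis using w lf(2) Esym by blast
    next
      case 4 then have "\<not> X" using v xJ by auto
      then show ?thesis using 4 l1(2) by auto
    next
      case 5 then have "X" using v by (auto split: if_splits)
      then show ?thesis using 5 l1(2) Esym by auto
    next
      case 6 then have "X" using v by (auto split: if_splits)
      then show ?thesis using 6 l2(2) Esym by auto
    qed
  qed
  then have mJ: "maximal_indep E V ?J" using indJ adj_not_indep unfolding maximal_indep_def by metis
  show ?thesis using mJ max_count[OF mJ] JT0 xJ by simp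
qed

end



context G16b begin

lemma finH: "finite (T0 - S)" using finT by auto
lemma nb_empty[simp]: "nbhd_set E {} = {}" unfolding nbhd_set_def by simp

lemma c2_lemma:
  assumes B: "\<forall>I. indep E T1 I \<longrightarrow> I \<inter> nbhd E x = {} \<longrightarrow>
      alpha E T0 \<le> indep_dom E (T0 - nbhd_set E I - nbhd E x)"
  shows "nbhd E x \<inter> T0 = {}"
proof (rule ccontr)
  assume "nbhd E x \<inter> T0 \<noteq> {}"
  then obtain y where y: "E x y" "y \<in> T0" unfolding nbhd_def by blast
  have yU: "y \<notin> U" using U_adj[OF y(1)] internal_nU[OF x_internal] by simp
  define Z where "Z = {z \<in> T0. E y z}"
  have exw: "\<exists>w. E z w \<and> w \<noteq> y \<and> (w \<in> T0 \<or> w \<in> T1)" if z: "z \<in> Z" for z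
  proof -
    have zT0: "z \<in> T0" and yz: "E y z" using z unfolding Z_def by auto
    have zU: "z \<notin> U" using U_adj[OF yz] yU by simp
    have "internal V E z" using zT0 zU unfolding type_set_def has_type_def by auto
    then obtain w where w: "E z w" "w \<noteq> y" using internal_two Esym[OF yz] by blast
    have wV: "w \<in> V" using Ein w by auto
    have "w \<noteq> x" using no_tri[OF y(1) yz] w(1) by auto
    moreover have "\<not> leaf V E w" using T0_no_leaf zT0 w(1) by auto
    ultimately show ?thesis using partition[OF wV] w by auto
  qed
  define wf where "wf z = (SOME w. E z w \<and> w \<noteq> y \<and> (w \<in> T0 \<or> w \<in> T1))" for z
  have wf: "E z (wf z)" "wf z \<noteq> y" "wf z \<in> T0 \<or> wf z \<in> T1" if "z \<in> Z" for z
    using someI_ex[OF exw[OF that]] unfolding wf_def by blast+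
  have Z: "z \<in> T0" "E y z" if "z \<in> Z" for z using that unfolding Z_def by auto
  have Czx: "\<not> E x (wf z)" if z: "z \<in> Z" for z
  proof
    assume e: "E x (wf z)"
    have "x \<noteq> z" using x_notT0 Z(1)[OF z] by auto
    then show False using no_c4[OF y(1) Z(2)[OF z] wf(1)[OF z] Esym[OF e]] wf(2)[OF z] by auto
  qed
  have Czz: "\<not> E (wf z) (wf z')" if z: "z \<in> Z" "z' \<in> Z" for z z'
  proof
    assume e: "E (wf z) (wf z')"
    show False
    proof (cases "z = z'")
      case True then show ?thesis using e Eirr by simp
    next
      case False
      have yz: "E y z" "E y z'" using Z z by auto
      have n1: "z \<noteq> wf z'"
      proof
        assume "z = wf z'"
        then have "E z' z" using wf(1)[OF z(2)] by simp
        then show False using no_tri[OF yz(1)] Esym yz(2) by blast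
      qed
      have n2: "wf z \<noteq> z'"
      proof
        assume "wf z = z'"
        then have "E z z'" using wf(1)[OF z(1)] by simp
        then show False using no_tri[OF yz(2)] Esym yz(1) by blast
      qed
      show False
        using no_c5[OF yz(1) wf(1)[OF z(1)] e Esym[OF wf(1)[OF z(2)]] Esym[OF yz(2)]]
          wf(2)[OF z(1)] wf(2)[OF z(2)] n1 n2 False by metis
    qed
  qed
  define I where "I = wf ` Z \<inter> T1"
  define W0 where "W0 = wf ` Z \<inter> T0"
  define H where "H = T0 - nbhd_set E I - nbhd E x"
  have indI: "indep E T1 I" unfolding indep_def I_def using Czz by blast
  have Ix: "I \<inter> nbhd E x = {}" unfolding I_def nbhd_def using Czx by blast
  have W0H: "W0 \<subseteq> H"
  proof
    fix w assume w: "w \<in> W0"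
    then obtain z where z: "z \<in> Z" "w = wf z" "w \<in> T0" unfolding W0_def by auto
    have "w \<notin> nbhd_set E I" unfolding nb_iff I_def using Czz z by blast
    moreover have "w \<notin> nbhd E x" unfolding nbx_iff using Czx z by blast
    ultimately show "w \<in> H" unfolding H_def using z by auto
  qed
  have indW: "indep E H W0" using W0H Czz unfolding indep_def W0_def by blast
  have finH': "finite H" unfolding H_def using finT by auto
  obtain K where K: "W0 \<subseteq> K" "maximal_indep E H K" using extend_maximal[OF finH' indW] by blast
  have KH: "K \<subseteq> H" and Kind: "\<forall>u\<in>K. \<forall>v\<in>K. \<not> E u v"
    using K(2) unfolding maximal_indep_def indep_def by auto
  have "alpha E T0 \<le> indep_dom E H" using B indI Ix unfolding H_def by blast
  also have "\<dots> \<le> card K" using indep_dom_le[OF finH' K(2)] .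
  finally have aK: "alpha E T0 \<le> card K" .
  have "y \<in> nbhd E x" using y(1) unfolding nbx_iff .
  then have yK: "y \<notin> K" using KH unfolding H_def by auto
  have noyk: "\<not> E y k" if k: "k \<in> K" for k
  proof
    assume e: "E y k"
    have kZ: "k \<in> Z" using k KH e unfolding Z_def H_def by auto
    from wf(3)[OF kZ] show False
    proof
      assume "wf k \<in> T0"
      then have "wf k \<in> K" using K(1) kZ unfolding W0_def by auto
      then show False using Kind k wf(1)[OF kZ] by blast
    next
      assume "wf k \<in> T1"
      then have "wf k \<in> I" using kZ unfolding I_def by auto
      then have "k \<in> nbhd_set E I" using Esym[OF wf(1)[OF kZ]] Esym unfolding nb_iff by blast
      then show False using k KH unfolding H_def by auto
    qed
  qed
  have "indep E T0 (insert y K)"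
    unfolding indep_def using y(2) KH Kind noyk Esym Eirr unfolding H_def by blast
  then have "card (insert y K) \<le> alpha E T0" using alpha_ge finT by blast
  moreover have "finite K" using KH finH' finite_subset by blast
  ultimately show False using yK aK by simp
qed

end



context G16b begin

lemma T1_sub_indep: "indep E V J \<Longrightarrow> indep E T1 (J \<inter> T1)" unfolding indep_def by auto

lemma alpha_V: "alpha E V = alpha E T0 + card T1 + 2"
proof (rule antisym)
  obtain J where J: "indep E V J" "card J = alpha E V" using alpha_attained finV by blast
  have "indep E T0 (J \<inter> T0)" using J unfolding indep_def by auto
  then have "card (J \<inter> T0) \<le> alpha E T0" using alpha_ge finT by blast
  then show "alpha E V \<le> alpha E T0 + card T1 + 2" using indep_count[OF J(1)] J(2) by linarith
next
  obtain M where M: "indep E T0 M" "card M = alpha E T0" using alpha_attained finT by blast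
  obtain K where K: "M \<subseteq> K" "maximal_indep E T0 K" using extend_maximal[OF finT(1) M(1)] by blast
  have fK: "finite K" using K(2) finT(1) finite_subset unfolding maximal_indep_def indep_def by blast
  have "card M \<le> card K" using K(1) fK card_mono by blast
  have K': "maximal_indep E (T0 - nbhd_set E {} - (if False then nbhd E x else {})) K" using K by simp
  have c: "maximal_indep E V ({} \<union> lf ` (T1 - {}) \<union> (if False then {x} else {l1,l2}) \<union> K)
     \<and> card ({} \<union> lf ` (T1 - {}) \<union> (if False then {x} else {l1,l2}) \<union> K) = card K + card T1 + (if False then 1 else 2)"
    by (rule construct[OF _ _ K']) simp_all
  then have "card K + card T1 + 2 \<le> alpha E V"
    using alpha_ge[OF finV] unfolding maximal_indep_def by (metis (no_types, lifting))
  then show "alpha E T0 + card T1 + 2 \<le> alpha E V" using \<open>card M \<le> card K\<close> M(2) by linarith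
qed

lemma main:
  "almost_well_covered E V \<longleftrightarrow>
    ((\<forall>v \<in> V. internal V E v \<and> v \<noteq> x \<longrightarrow> has_type V E 0 v \<or> has_type V E 1 v)
     \<and> nbhd E x \<inter> type_set V E 0 = {}
     \<and> well_covered E (type_set V E 0)
     \<and> (\<forall>I. indep E (type_set V E 1) I \<longrightarrow>
          (I \<inter> nbhd E x = {} \<longrightarrow>
             alpha E (type_set V E 0) = indep_dom E (type_set V E 0 - nbhd_set E I))
        \<and> (I \<inter> nbhd E x \<noteq> {} \<longrightarrow>
             int (alpha E (type_set V E 0)) - int (indep_dom E (type_set V E 0 - nbhd_set E I)) \<le> 1)))"
  (is "?L \<longleftrightarrow> ?c1 \<and> ?c2 \<and> ?c3 \<and> ?c4")
proof -
  let ?A = "alpha E T0"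
  have c1: ?c1
  proof (intro ballI impI)
    fix v assume v: "v \<in> V" "internal V E v \<and> v \<noteq> x"
    then consider "v \<in> T0" | "v \<in> T1" | "leaf V E v" using partition by blast
    then show "has_type V E 0 v \<or> has_type V E 1 v"
      using v unfolding type_set_def internal_def by cases auto
  qed
  show ?thesis
  proof
    assume L: ?L
    have iV: "indep_dom E V = ?A + card T1 + 1"
      using L alpha_V unfolding almost_well_covered_def by linarith
    have maxJ: "?A + card T1 + 1 \<le> card J" if "maximal_indep E V J" for J
      using indep_dom_le[OF finV that] iV by simp
    have Aineq: "?A \<le> indep_dom E (T0 - nbhd_set E I) + 1" if I: "indep E T1 I" for I
    proof -
      obtain K where K: "maximal_indep E (T0 - nbhd_set E I) K" "card K = indep_dom E (T0 - nbhd_set E I)"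
        using indep_dom_attained finH by blast
      have K': "maximal_indep E (T0 - nbhd_set E I - (if False then nbhd E x else {})) K" using K by simp
      have "?A + card T1 + 1 \<le> card K + card T1 + 2"
        using construct[OF I _ K'] maxJ by (metis (no_types, lifting) if_False)
      then show ?thesis using K(2) by linarith
    qed
    have B: "\<forall>I. indep E T1 I \<longrightarrow> I \<inter> nbhd E x = {} \<longrightarrow>
      ?A \<le> indep_dom E (T0 - nbhd_set E I - nbhd E x)"
    proof (intro allI impI)
      fix I assume I: "indep E T1 I" and Ix: "I \<inter> nbhd E x = {}"
      obtain K where K: "maximal_indep E (T0 - nbhd_set E I - nbhd E x) K"
          "card K = indep_dom E (T0 - nbhd_set E I - nbhd E x)"
        using indep_dom_attained[of "T0 - nbhd_set E I - nbhd E x"] finT by auto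
      have K': "maximal_indep E (T0 - nbhd_set E I - (if True then nbhd E x else {})) K" using K by simp
      have "?A + card T1 + 1 \<le> card K + card T1 + 1"
        using construct[OF I _ K'] Ix maxJ by (metis (no_types, lifting) if_True)
      then show "?A \<le> indep_dom E (T0 - nbhd_set E I - nbhd E x)" using K(2) by linarith
    qed
    have c2: ?c2 using c2_lemma[OF B] .
    have a: "?A = indep_dom E (T0 - nbhd_set E I)" if I: "indep E T1 I" "I \<inter> nbhd E x = {}" for I
    proof -
      have eq: "T0 - nbhd_set E I - nbhd E x = T0 - nbhd_set E I" using c2 by auto
      have "?A \<le> indep_dom E (T0 - nbhd_set E I)" using B I eq by metis
      moreover have "indep_dom E (T0 - nbhd_set E I) \<le> alpha E (T0 - nbhd_set E I)"
        using indep_dom_le_alpha finH by blast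
      moreover have "alpha E (T0 - nbhd_set E I) \<le> ?A" using alpha_mono finT by blast
      ultimately show ?thesis by linarith
    qed
    have c3: ?c3 using a[of "{}"] unfolding well_covered_def by simp
    have c4: ?c4 using a Aineq by fastforce
    show "?c1 \<and> ?c2 \<and> ?c3 \<and> ?c4" using c1 c2 c3 c4 by blast
  next
    assume R: "?c1 \<and> ?c2 \<and> ?c3 \<and> ?c4"
    then have c2: ?c2 and c3: ?c3 and c4: ?c4 by auto
    have lower: "?A + card T1 + 1 \<le> card J" if J: "maximal_indep E V J" for J
    proof -
      have ind: "indep E V J" using J unfolding maximal_indep_def by simp
      let ?I = "J \<inter> T1"
      have I: "indep E T1 ?I" using T1_sub_indep[OF ind] .
      have R: "maximal_indep E (T0 - nbhd_set E ?I - (if x \<in> J then nbhd E x else {})) (J \<inter> T0)"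
        using restrict[OF J] .
      have cJ: "card J = card (J \<inter> T0) + card T1 + (if x \<in> J then 1 else 2)" using max_count[OF J] .
      show ?thesis
      proof (cases "x \<in> J")
        case True
        have Ix: "?I \<inter> nbhd E x = {}" using ind True unfolding indep_def nbhd_def by auto
        have eq: "T0 - nbhd_set E ?I - nbhd E x = T0 - nbhd_set E ?I" using c2 by auto
        have "indep_dom E (T0 - nbhd_set E ?I) \<le> card (J \<inter> T0)"
          using indep_dom_le[OF finH] R True eq by metis
        moreover have "?A = indep_dom E (T0 - nbhd_set E ?I)" using c4 I Ix by blast
        ultimately show ?thesis using cJ True by simp
      next
        case False
        have "indep_dom E (T0 - nbhd_set E ?I) \<le> card (J \<inter> T0)"
          using indep_dom_le[OF finH] R False by simp
        moreover have "int ?A - int (indep_dom E (T0 - nbhd_set E ?I)) \<le> 1" using c4 I by fastforce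
        ultimately show ?thesis using cJ False by simp
      qed
    qed
    have lowi: "?A + card T1 + 1 \<le> indep_dom E V"
      using indep_dom_attained[OF finV] lower by metis
    obtain K where K: "maximal_indep E T0 K" "card K = indep_dom E T0"
      using indep_dom_attained finT by blast
    have K': "maximal_indep E (T0 - nbhd_set E {} - (if True then nbhd E x else {})) K"
      using K c2 by (simp add: Diff_triv Int_commute)
    have c: "maximal_indep E V ({} \<union> lf ` (T1 - {}) \<union> (if True then {x} else {l1,l2}) \<union> K)
     \<and> card ({} \<union> lf ` (T1 - {}) \<union> (if True then {x} else {l1,l2}) \<union> K) = card K + card T1 + (if True then 1 else 2)"
      by (rule construct[OF _ _ K']) simp_all
    then have "indep_dom E V \<le> card K + card T1 + 1"
      using indep_dom_le[OF finV] by (metis (no_types, lifting) if_True)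
    moreover have "card K = ?A" using K(2) c3 unfolding well_covered_def by simp
    ultimately show ?L using lowi alpha_V unfolding almost_well_covered_def by linarith
  qed
qed

end

theorem theorem16:
  fixes V :: "'a set" and E :: "'a \<Rightarrow> 'a \<Rightarrow> bool" and x :: 'a
  assumes "graph V E"
    and "girth_at_least V E 6"
    and "x \<in> V" and "has_type V E 2 x"
    and "\<forall>v \<in> V. has_type V E 2 v \<longrightarrow> v = x"
    and "\<forall>v \<in> V. \<forall>k \<ge> 3. \<not> has_type V E k v"
  shows "almost_well_covered E V \<longleftrightarrow>
    ((\<forall>v \<in> V. internal V E v \<and> v \<noteq> x \<longrightarrow> has_type V E 0 v \<or> has_type V E 1 v)
     \<and> nbhd E x \<inter> type_set V E 0 = {}
     \<and> well_covered E (type_set V E 0)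
     \<and> (\<forall>I. indep E (type_set V E 1) I \<longrightarrow>
          (I \<inter> nbhd E x = {} \<longrightarrow>
             alpha E (type_set V E 0) = indep_dom E (type_set V E 0 - nbhd_set E I))
        \<and> (I \<inter> nbhd E x \<noteq> {} \<longrightarrow>
             int (alpha E (type_set V E 0)) - int (indep_dom E (type_set V E 0 - nbhd_set E I)) \<le> 1)))"
proof -
  interpret G16 V E x using assms by unfold_locales
  obtain l1 l2 where "l1 \<noteq> l2" "lvs x = {l1, l2}" using x_lvs by (meson card_2_iff)
  then interpret G16b V E x l1 l2 by unfold_locales
  show ?thesis by (rule main)
qed


end
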